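(* Fix $n\ge 1$. List all periodic canonical increment arrays over all coalition sizes $s=1,\ldots,n$ in some fixed order as $\underline{t}^{(1)},\ldots,\underline{t}^{(M)}$, where $M=\sum_{s=1}^{n}|\mathcal{P}(n,s)|$. For $\underline{t}^{(j)}$ of size $s_j$ let $d^{(j)}=n\,\pi(\underline{t}^{(j)})/s_j$, and let $H_1=0$, $H_j=\sum_{i=1}^{j-1}d^{(i)}$. Say agent $x\in\{1,\ldots,n\}$ is designated for $\underline{t}^{(j)}$ iff $(x-1-H_j)\bmod n<d^{(j)}$ (with $\bmod$ taking values in $\{0,\ldots,n-1\}$). Define the total allocation of agent $x$ as \[CV_x=\bigcup_{s=1}^{n}\{C(x,\underline{t}):\underline{t}\in\mathcal{A}(n,s)\}\;\cup\;\{C(x,\underline{t}^{(j)}):1\le j\le M,\ x\text{ designated for }\underline{t}^{(j)}\}.\] Then for every agent $x\in\{1,\ldots,n\}$, \[\left\lfloor\frac{2^n-1}{n}\right\rfloor\le|CV_x|\le\left\lceil\frac{2^n-1}{n}\right\rceil,\] so the total numbers of coalitions allocated to any two agents differ by at most one.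
   Context: Agent identifiers are $\{1,\ldots,n\}$, arithmetic on identifiers is modulo $n$ with representatives in $\{1,\ldots,n\}$ (a value $0$ is replaced by $n$). An increment array (IA) of size $s$ ($1\le s\le n$) for $n$ agents is a tuple $\underline{t}=\langle t_0,\ldots,t_{s-1}\rangle$ of non-negative integers with $\sum t_i=n-s$. Cumulative increments: $\varphi_1=0$, $\varphi_i=\sum_{k=0}^{i-2}(t_k+1)$ for $2\le i\le s+1$. The coalition generated from $x$ is $C(x,\underline{t})=\{x\}\cup\bigcup_{i=2}^{s}\{(x+\varphi_i)\bmod n\}$ (residues in $\{1,\ldots,n\}$). Two IAs of the same size are equivalent ($\approx$) if one is a circular shift of the other; the canonical representative of an equivalence class is its lexicographically smallest member. $\mathcal{E}(n,s)$ is the set of canonical representatives of IAs of size $s$. The period $\pi(\underline{t})$ is the least $p\in\{1,\ldots,s\}$ such that $\underline{t}$ consists of $s/p$ identical consecutive copies of its first $p$ entries. $\mathcal{A}(n,s)=\{\underline{t}\in\mathcal{E}(n,s):\pi(\underline{t})=s\}$ (aperiodic) and $\mathcal{P}(n,s)=\{\underline{t}\in\mathcal{E}(n,s):\pi(\underline{t})<s\}$ (periodic). *)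

theory Defs
  imports Complex_Main
begin

definition modn :: "nat \<Rightarrow> nat \<Rightarrow> nat" where
  "modn n a = (if a mod n = 0 then n else a mod n)"

definition is_IA :: "nat \<Rightarrow> nat \<Rightarrow> nat list \<Rightarrow> bool" where
  "is_IA n s t \<longleftrightarrow> 1 \<le> s \<and> s \<le> n \<and> length t = s \<and> sum_list t = n - s"

definition phi :: "nat list \<Rightarrow> nat \<Rightarrow> nat" where
  "phi t i = (\<Sum>k<i - 1. t ! k + 1)"

definition coalition :: "nat \<Rightarrow> nat \<Rightarrow> nat list \<Rightarrow> nat set" where
  "coalition n x t = {x} \<union> (\<Union>i\<in>{2..length t}. {modn n (x + phi t i)})"

text \<open>Canonical representatives: lexicographically smallest among all circular shifts.\<close>
definition Eset :: "nat \<Rightarrow> nat \<Rightarrow> nat list set" where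
  "Eset n s = {t. is_IA n s t \<and> (\<forall>k. lexordp_eq t (rotate k t))}"

definition period :: "nat list \<Rightarrow> nat" where
  "period t = (LEAST p. p \<in> {1..length t} \<and> p dvd length t \<and>
                 t = concat (replicate (length t div p) (take p t)))"

definition Aset :: "nat \<Rightarrow> nat \<Rightarrow> nat list set" where
  "Aset n s = {t \<in> Eset n s. period t = s}"

definition Pset :: "nat \<Rightarrow> nat \<Rightarrow> nat list set" where
  "Pset n s = {t \<in> Eset n s. period t < s}"

definition dval :: "nat \<Rightarrow> nat list \<Rightarrow> nat" where
  "dval n t = n * period t div length t"

text \<open>H_j (0-indexed j): sum of d over the earlier entries of the list L.\<close>
definition Hval :: "nat \<Rightarrow> nat list list \<Rightarrow> nat \<Rightarrow> nat" where
  "Hval n L j = (\<Sum>i<j. dval n (L ! i))"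

definition designated :: "nat \<Rightarrow> nat list list \<Rightarrow> nat \<Rightarrow> nat \<Rightarrow> bool" where
  "designated n L x j \<longleftrightarrow>
     (int x - 1 - int (Hval n L j)) mod int n < int (dval n (L ! j))"

definition CV :: "nat \<Rightarrow> nat list list \<Rightarrow> nat \<Rightarrow> nat set set" where
  "CV n L x = (\<Union>s\<in>{1..n}. coalition n x ` Aset n s) \<union>
              {coalition n x (L ! j) | j. j < length L \<and> designated n L x j}"

end

theory Submission
  imports Defs
begin


lemma sum_list_rotate: "sum_list (rotate k (xs::nat list)) = sum_list xs"
proof (induction k)
  case 0 then show ?case by simp
next
  case (Suc k)
  have "\<And>ys::nat list. sum_list (rotate1 ys) = sum_list ys" by (case_tac ys) auto
  then show ?case using Suc by simp
qed

lemma rotate_mult_id: "rotate p t = t \<Longrightarrow> rotate (p * m) t = t"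
proof (induction m)
  case 0 then show ?case by simp
next
  case (Suc m)
  have "rotate (p * Suc m) t = rotate p (rotate (p*m) t)" by (simp add: rotate_rotate add.commute)
  then show ?case using Suc by simp
qed

lemma rotate_cancel: "rotate j a = rotate j b \<Longrightarrow> a = b"
proof (induction j)
  case 0 then show ?case by simp
next
  case (Suc j)
  from Suc.prems have "rotate1 (rotate j a) = rotate1 (rotate j b)" by simp
  then have "rotate j a = rotate j b" by (rule injD[OF inj_rotate1])
  then show ?case by (rule Suc.IH)
qed

definition p0 :: "nat list \<Rightarrow> nat" where
  "p0 t = (LEAST p. 0 < p \<and> rotate p t = t)"

lemma p0_props:
  assumes "t \<noteq> []"
  shows "0 < p0 t" "rotate (p0 t) t = t" "p0 t \<le> length t"
    "\<And>q. 0 < q \<Longrightarrow> rotate q t = t \<Longrightarrow> p0 t \<le> q"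
proof -
  have ex: "0 < length t \<and> rotate (length t) t = t" using assms by simp
  show "0 < p0 t" "rotate (p0 t) t = t"
    unfolding p0_def using LeastI[of "\<lambda>p. 0 < p \<and> rotate p t = t", OF ex] by auto
  show "p0 t \<le> length t" unfolding p0_def using Least_le[of "\<lambda>p. 0 < p \<and> rotate p t = t", OF ex] .
  show "\<And>q. 0 < q \<Longrightarrow> rotate q t = t \<Longrightarrow> p0 t \<le> q"
    unfolding p0_def by (rule Least_le) auto
qed

lemma rotate_mod_p0:
  assumes "t \<noteq> []"
  shows "rotate k t = rotate (k mod p0 t) t"
proof -
  have "k = k mod p0 t + p0 t * (k div p0 t)" by simp
  then have "rotate k t = rotate (k mod p0 t) (rotate (p0 t * (k div p0 t)) t)"
    by (metis rotate_rotate)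
  then show ?thesis using rotate_mult_id[OF p0_props(2)[OF assms]] by simp
qed

lemma p0_dvd:
  assumes "t \<noteq> []"
  shows "p0 t dvd length t"
proof -
  have "rotate (length t mod p0 t) t = t" using rotate_mod_p0[OF assms, of "length t"] by simp
  moreover have "length t mod p0 t < p0 t" using p0_props(1)[OF assms] by simp
  ultimately have "length t mod p0 t = 0"
    using p0_props(4)[OF assms, of "length t mod p0 t"] by (cases "length t mod p0 t = 0") auto
  then show ?thesis by auto
qed

definition orb :: "nat list \<Rightarrow> nat list set" where
  "orb t = range (\<lambda>k. rotate k t)"

lemma orb_eq:
  assumes "t \<noteq> []"
  shows "orb t = (\<lambda>k. rotate k t) ` {..<p0 t}"
proof -
  have "rotate k t \<in> (\<lambda>k. rotate k t) ` {..<p0 t}" for k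
    using rotate_mod_p0[OF assms, of k] p0_props(1)[OF assms] by auto
  then show ?thesis unfolding orb_def by auto
qed

lemma card_orb:
  assumes "t \<noteq> []"
  shows "card (orb t) = p0 t"
proof -
  have "inj_on (\<lambda>k. rotate k t) {..<p0 t}"
  proof (rule inj_onI)
    fix i j assume i: "i \<in> {..<p0 t}" and j: "j \<in> {..<p0 t}" and e: "rotate i t = rotate j t"
    show "i = j"
    proof (rule ccontr)
      assume "i \<noteq> j"
      then consider "i < j" | "j < i" by linarith
      then show False
      proof cases
        case 1
        have "rotate (j - i) (rotate i t) = rotate j t" using 1 by (simp add: rotate_rotate)
        then have "rotate (j - i) (rotate j t) = rotate j t" using e by simp
        then have "rotate j (rotate (j - i) t) = rotate j t" by (simp add: rotate_rotate add.commute)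
        then have "rotate (j - i) t = t"
          by (rule rotate_cancel)
        then show False using p0_props(4)[OF assms, of "j-i"] 1 j by auto
      next
        case 2
        have "rotate (i - j) (rotate j t) = rotate i t" using 2 by (simp add: rotate_rotate)
        then have "rotate (i - j) (rotate i t) = rotate i t" using e by simp
        then have "rotate i (rotate (i - j) t) = rotate i t" by (simp add: rotate_rotate add.commute)
        then have "rotate (i - j) t = t"
          by (rule rotate_cancel)
        then show False using p0_props(4)[OF assms, of "i-j"] 2 i by auto
      qed
    qed
  qed
  then show ?thesis using orb_eq[OF assms] card_image by fastforce
qed



lemma nth_concat_replicate:
  assumes "length xs = p" "i < q * p"
  shows "concat (replicate q xs) ! i = xs ! (i mod p)"
  using assms(2)
proof (induction q arbitrary: i)
  case 0 then show ?case by simp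
next
  case (Suc q)
  show ?case
  proof (cases "i < p")
    case True
    then show ?thesis using assms(1) by (simp add: nth_append)
  next
    case False
    then have "i - p < q * p" using Suc.prems by auto
    then have "concat (replicate q xs) ! (i - p) = xs ! ((i - p) mod p)" by (rule Suc.IH)
    moreover have "(i - p) mod p = i mod p" using False by (simp add: mod_if)
    ultimately show ?thesis using False assms(1) by (simp add: nth_append)
  qed
qed

lemma sum_list_concat_nat: "sum_list (concat (xss :: nat list list)) = sum_list (map sum_list xss)"
  by (induction xss) auto

lemma rep_iff_rotate:
  assumes "0 < p" "p dvd length t" "t \<noteq> []"
  shows "(t = concat (replicate (length t div p) (take p t))) \<longleftrightarrow> rotate p t = t"
proof -
  define s where "s = length t"
  have sp: "length t div p * p = s" using assms s_def by simp
  have lt: "length (take p t) = p" using assms dvd_imp_le[of p "length t"] by auto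
  have A: "(t = concat (replicate (length t div p) (take p t))) \<longleftrightarrow> (\<forall>i<s. t ! i = t ! (i mod p))"
  proof
    assume h: "t = concat (replicate (length t div p) (take p t))"
    show "\<forall>i<s. t ! i = t ! (i mod p)"
    proof (intro allI impI)
      fix i assume "i < s"
      then have "t ! i = take p t ! (i mod p)"
        using nth_concat_replicate[OF lt, of i "length t div p"] sp h by metis
      then show "t ! i = t ! (i mod p)" using assms(1) by simp
    qed
  next
    assume h: "\<forall>i<s. t ! i = t ! (i mod p)"
    show "t = concat (replicate (length t div p) (take p t))"
    proof (rule nth_equalityI)
      show "length t = length (concat (replicate (length t div p) (take p t)))"
        using lt sp s_def by (simp add: length_concat sum_list_replicate)
      fix i assume "i < length t"
      then show "t ! i = concat (replicate (length t div p) (take p t)) ! i"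
        using nth_concat_replicate[OF lt, of i "length t div p"] sp h s_def assms(1) by simp
    qed
  qed
  have B: "rotate p t = t \<longleftrightarrow> (\<forall>i<s. t ! i = t ! (i mod p))"
  proof
    assume h: "rotate p t = t"
    show "\<forall>i<s. t ! i = t ! (i mod p)"
    proof (intro allI impI)
      fix i assume i: "i < s"
      have "rotate (p * (i div p)) t = t" by (rule rotate_mult_id[OF h])
      moreover have "i mod p < s" using i by (meson le_less_trans mod_less_eq_dividend)
      ultimately have "t ! (i mod p) = t ! ((p * (i div p) + i mod p) mod s)"
        using nth_rotate[of "i mod p" t "p * (i div p)"] s_def by simp
      also have "\<dots> = t ! i" using i by simp
      finally show "t ! i = t ! (i mod p)" by simp
    qed
  next
    assume h: "\<forall>i<s. t ! i = t ! (i mod p)"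
    show "rotate p t = t"
    proof (rule nth_equalityI)
      show "length (rotate p t) = length t" by simp
      fix i assume i: "i < length (rotate p t)"
      then have "rotate p t ! i = t ! ((p + i) mod s)" using nth_rotate s_def by simp
      also have "\<dots> = t ! (((p + i) mod s) mod p)"
      proof -
        have "0 < s" using assms(3) s_def by simp
        then have "(p + i) mod s < s" by simp
        then show ?thesis using h by blast
      qed
      also have "((p + i) mod s) mod p = i mod p"
        using assms s_def by (simp add: mod_mod_cancel)
      also have "t ! (i mod p) = t ! i" using h i s_def by simp
      finally show "rotate p t ! i = t ! i" .
    qed
  qed
  show ?thesis using A B by simp
qed

lemma period_eq_p0:
  assumes "t \<noteq> []"
  shows "period t = p0 t"
  unfolding period_def
proof (rule Least_equality)
  show "p0 t \<in> {1..length t} \<and> p0 t dvd length t \<and>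
    t = concat (replicate (length t div p0 t) (take (p0 t) t))"
    using p0_props[OF assms] p0_dvd[OF assms] rep_iff_rotate[of "p0 t" t] assms by auto
next
  fix y assume "y \<in> {1..length t} \<and> y dvd length t \<and> t = concat (replicate (length t div y) (take y t))"
  then show "p0 t \<le> y" using rep_iff_rotate[of y t] assms p0_props(4)[OF assms, of y] by auto
qed

lemma period_props:
  assumes "t \<noteq> []"
  shows "0 < period t" "period t \<le> length t" "period t dvd length t"
    "t = concat (replicate (length t div period t) (take (period t) t))"
  using p0_props[OF assms] p0_dvd[OF assms] rep_iff_rotate[of "p0 t" t] assms period_eq_p0[OF assms]
  by auto

lemma period_dvd_n:
  assumes "t \<noteq> []" "sum_list t = n - length t" "length t \<le> n"
  shows "dval n t * length t = n * period t"
proof -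
  define p where "p = period t"
  define q where "q = length t div p"
  define c where "c = sum_list (take p t)"
  have p: "0 < p" "p dvd length t" using period_props[OF assms(1)] p_def by auto
  have sq: "length t = q * p" using p q_def by simp
  have "sum_list t = sum_list (concat (replicate q (take p t)))"
    using period_props(4)[OF assms(1)] p_def q_def by metis
  also have "\<dots> = q * c" by (simp add: sum_list_concat_nat sum_list_replicate c_def)
  finally have "n - length t = q * c" using assms(2) by simp
  then have n: "n = q * (c + p)" using assms(3) sq by (simp add: algebra_simps)
  have "n * p = length t * (c + p)" using n sq by (simp add: algebra_simps)
  then have "dval n t = length t * (c + p) div length t" unfolding dval_def p_def by simp
  then have "dval n t = c + p" using assms(1) by simp
  then show ?thesis using \<open>n * p = length t * (c + p)\<close> p_def by (simp add: algebra_simps)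
qed



lemma is_IA_rotate: "is_IA n s t \<Longrightarrow> is_IA n s (rotate k t)"
  unfolding is_IA_def by (simp add: sum_list_rotate)

lemma orb_trans:
  assumes "u \<in> orb t"
  shows "orb u = orb t"
proof (cases "t = []")
  case True then show ?thesis using assms by (simp add: orb_def)
next
  case False
  obtain j where u: "u = rotate j t" using assms orb_def by auto
  define s where "s = length t"
  have s0: "0 < s" using False s_def by simp
  have "orb u \<subseteq> orb t" unfolding orb_def u by (auto simp: rotate_rotate)
  moreover have "t = rotate (s - j mod s) u"
  proof -
    have "rotate (s - j mod s) u = rotate (s - j mod s + j) t" using u by (simp add: rotate_rotate)
    also have "(s - j mod s + j) mod s = 0"
    proof -
      have "j mod s < s" using s0 by simp
      then have "s - j mod s + j = s + s * (j div s)"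
        using mod_mult_div_eq[of j s] by linarith
      then have "s - j mod s + j = s * (1 + j div s)" by (simp add: distrib_left)
      then show ?thesis by simp
    qed
    then have "rotate (s - j mod s + j) t = t" using s_def by simp
    finally show ?thesis by simp
  qed
  then have "orb t \<subseteq> orb u" unfolding orb_def by (auto simp: rotate_rotate)
  ultimately show ?thesis by blast
qed

lemma self_in_orb: "t \<in> orb t"
  unfolding orb_def by (metis rangeI rotate0 id_apply)

lemma finite_orb: "finite (orb t)"
proof (cases "t = []")
  case True then show ?thesis by (simp add: orb_def)
next
  case False then show ?thesis by (simp add: orb_eq[OF False])
qed

lemma lex_min_exists:
  assumes "finite S" "S \<noteq> {}"
  shows "\<exists>m\<in>S. \<forall>y\<in>S. lexordp_eq m (y :: nat list)"
  using assms
proof (induction S rule: finite_ne_induct)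
  case (singleton x) then show ?case by (simp add: lexordp_eq_refl)
next
  case (insert x F)
  then obtain m where m: "m \<in> F" "\<forall>y\<in>F. lexordp_eq m y" by blast
  show ?case
  proof (cases "lexordp_eq m x")
    case True then show ?thesis using m by auto
  next
    case False
    then have "lexordp_eq x m" using lexordp_eq_linear by blast
    then show ?thesis using m by (auto intro: lexordp_eq_trans lexordp_eq_refl)
  qed
qed

lemma IA_decomp:
  "{t. is_IA n s t} = (\<Union>t\<in>Eset n s. orb t)"
proof
  show "{t. is_IA n s t} \<subseteq> (\<Union>t\<in>Eset n s. orb t)"
  proof
    fix u assume "u \<in> {t. is_IA n s t}"
    then have u: "is_IA n s u" by simp
    obtain m where m: "m \<in> orb u" "\<forall>y\<in>orb u. lexordp_eq m y"
      using lex_min_exists[OF finite_orb, of u] self_in_orb[of u] by blast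
    have om: "orb m = orb u" using orb_trans[OF m(1)] .
    have "is_IA n s m" using m(1) u is_IA_rotate unfolding orb_def by auto
    moreover have "\<forall>k. lexordp_eq m (rotate k m)"
    proof
      fix k
      have "rotate k m \<in> orb m" by (simp add: orb_def)
      then show "lexordp_eq m (rotate k m)" using m(2) om by simp
    qed
    ultimately have "m \<in> Eset n s" unfolding Eset_def by simp
    moreover have "u \<in> orb m" using om self_in_orb by simp
    ultimately show "u \<in> (\<Union>t\<in>Eset n s. orb t)" by blast
  qed
next
  show "(\<Union>t\<in>Eset n s. orb t) \<subseteq> {t. is_IA n s t}"
    unfolding Eset_def orb_def using is_IA_rotate by auto
qed

lemma orb_disjoint:
  assumes "t \<in> Eset n s" "t' \<in> Eset n s" "t \<noteq> t'"
  shows "orb t \<inter> orb t' = {}"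
proof (rule ccontr)
  assume "orb t \<inter> orb t' \<noteq> {}"
  then obtain u where "u \<in> orb t" "u \<in> orb t'" by blast
  then have "orb t = orb t'" using orb_trans[of u t] orb_trans[of u t'] by simp
  then have "t' \<in> orb t" "t \<in> orb t'" using self_in_orb by auto
  then obtain k k' where kk: "t' = rotate k t" "t = rotate k' t'" unfolding orb_def by auto
  have "lexordp_eq t (rotate k t)" "lexordp_eq t' (rotate k' t')" using assms unfolding Eset_def by auto
  then have "lexordp_eq t t'" "lexordp_eq t' t" by (simp_all only: kk(1)[symmetric] kk(2)[symmetric])
  then show False using assms(3) lexordp_eq_antisym by blast
qed

lemma card_IA:
  assumes "1 \<le> s" "s \<le> n"
  shows "card {t. is_IA n s t} = (n - 1) choose (s - 1)"
proof -
  have "{t. is_IA n s t} = {l::nat list. size l = s \<and> sum_list l = n - s}"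
    using assms unfolding is_IA_def by auto
  then have "card {t. is_IA n s t} = (n - s + s - 1) choose (n - s)"
    using card_length_sum_list by simp
  also have "\<dots> = (n - 1) choose (n - s)" using assms by simp
  also have "\<dots> = (n - 1) choose (s - 1)"
    using assms binomial_symmetric[of "s - 1" "n - 1"] by simp
  finally show ?thesis .
qed

lemma finite_IA:
  assumes "1 \<le> s" "s \<le> n"
  shows "finite {t. is_IA n s t}"
proof -
  have "0 < (n - 1) choose (s - 1)" using assms by simp
  then show ?thesis using card_IA[OF assms] card_ge_0_finite by metis
qed

lemma finite_Eset:
  assumes "1 \<le> s" "s \<le> n"
  shows "finite (Eset n s)"
  using finite_IA[OF assms] by (rule rev_finite_subset) (auto simp: Eset_def)

lemma sum_period:
  assumes "1 \<le> s" "s \<le> n"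
  shows "(\<Sum>t\<in>Eset n s. period t) = (n - 1) choose (s - 1)"
proof -
  have "card (\<Union>t\<in>Eset n s. orb t) = (\<Sum>t\<in>Eset n s. card (orb t))"
    by (rule card_UN_disjoint) (auto simp: finite_Eset[OF assms] finite_orb orb_disjoint)
  also have "\<dots> = (\<Sum>t\<in>Eset n s. period t)"
  proof (rule sum.cong)
    fix t assume "t \<in> Eset n s"
    then have "t \<noteq> []" using assms unfolding Eset_def is_IA_def by auto
    then show "card (orb t) = period t" using card_orb period_eq_p0 by simp
  qed simp
  finally show ?thesis using IA_decomp[of n s] card_IA[OF assms] by simp
qed

lemma sum_dval_E:
  assumes "1 \<le> s" "s \<le> n"
  shows "(\<Sum>t\<in>Eset n s. dval n t) = n choose s"
proof -
  have "(\<Sum>t\<in>Eset n s. dval n t) * s = (\<Sum>t\<in>Eset n s. dval n t * s)"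
    by (simp add: sum_distrib_right)
  also have "\<dots> = (\<Sum>t\<in>Eset n s. n * period t)"
  proof (rule sum.cong)
    fix t assume "t \<in> Eset n s"
    then have "is_IA n s t" unfolding Eset_def by simp
    then have "t \<noteq> []" "length t = s" "sum_list t = n - s" using assms unfolding is_IA_def by auto
    then show "dval n t * s = n * period t"
      using period_dvd_n[of t n] assms by auto
  qed simp
  also have "\<dots> = n * ((n - 1) choose (s - 1))" using sum_period[OF assms] by (simp add: sum_distrib_left[symmetric])
  also have "\<dots> = (n choose s) * s" using times_binomial_minus1_eq[of s n] assms by (metis mult.commute One_nat_def less_eq_Suc_le)
  finally show ?thesis using assms by simp
qed

lemma E_split:
  assumes "1 \<le> s" "s \<le> n"
  shows "n * card (Aset n s) + (\<Sum>t\<in>Pset n s. dval n t) = n choose s"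
proof -
  have per0: "t \<in> Eset n s \<Longrightarrow> length t = s \<and> t \<noteq> []" for t
    using assms unfolding Eset_def is_IA_def by auto
  have per: "t \<in> Eset n s \<Longrightarrow> period t \<le> s \<and> length t = s \<and> t \<noteq> []" for t
    using period_props(2)[of t] per0[of t] by auto
  have "Eset n s = Aset n s \<union> Pset n s" unfolding Aset_def Pset_def using per le_neq_implies_less by blast
  moreover have "Aset n s \<inter> Pset n s = {}" unfolding Aset_def Pset_def by auto
  moreover have "finite (Aset n s)" "finite (Pset n s)" using finite_Eset[OF assms]
    unfolding Aset_def Pset_def by auto
  ultimately have e1: "(\<Sum>t\<in>Eset n s. dval n t) = (\<Sum>t\<in>Aset n s. dval n t) + (\<Sum>t\<in>Pset n s. dval n t)"
    by (simp add: sum.union_disjoint)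
  have e2: "(\<Sum>t\<in>Aset n s. dval n t) = n * card (Aset n s)"
  proof -
    have "(\<Sum>t\<in>Aset n s. dval n t) = (\<Sum>t\<in>Aset n s. n)"
    proof (rule sum.cong)
      fix t assume "t \<in> Aset n s"
      then have "period t = s" "length t = s" using per unfolding Aset_def by auto
      then show "dval n t = n" unfolding dval_def using assms by simp
    qed simp
    then show ?thesis by simp
  qed
  show ?thesis using sum_dval_E[OF assms] e1 e2 by linarith
qed



lemma phi_Suc: "1 \<le> i \<Longrightarrow> phi t (Suc i) = phi t i + t ! (i - 1) + 1"
  unfolding phi_def by (cases i) auto

lemma phi_1: "phi t 1 = 0" unfolding phi_def by simp

lemma phi_mono: "1 \<le> i \<Longrightarrow> i < j \<Longrightarrow> phi t i < phi t j"
proof (induction j)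
  case 0 then show ?case by simp
next
  case (Suc j)
  show ?case
  proof (cases "i = j")
    case True then show ?thesis using phi_Suc[of j t] Suc.prems by simp
  next
    case False
    then have "phi t i < phi t j" using Suc by simp
    then show ?thesis using phi_Suc[of j t] Suc.prems by simp
  qed
qed

lemma phi_last:
  assumes "is_IA n s t"
  shows "phi t (Suc s) = n"
proof -
  have "phi t (Suc s) = (\<Sum>k<s. t ! k + 1)" unfolding phi_def by simp
  also have "\<dots> = (\<Sum>k<s. t ! k) + s" unfolding sum.distrib by simp
  also have "(\<Sum>k<s. t ! k) = sum_list t" using assms unfolding is_IA_def
    by (simp add: sum_list_sum_nth lessThan_atLeast0)
  finally show ?thesis using assms unfolding is_IA_def by simp
qed

lemma phi_lt_n:
  assumes "is_IA n s t" "i \<in> {1..s}"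
  shows "phi t i < n"
  using phi_mono[of i "Suc s" t] phi_last[OF assms(1)] assms(2) by simp

lemma modn_mod: "0 < n \<Longrightarrow> modn n a mod n = a mod n"
  unfolding modn_def by auto

lemma offset_recover:
  assumes "x \<in> {1..n}" "d < n"
  shows "(modn n (x + d) + (n - x)) mod n = d"
proof -
  have n: "0 < n" using assms by simp
  have "(modn n (x + d) + (n - x)) mod n = (modn n (x + d) mod n + (n - x)) mod n"
    by (simp add: mod_add_left_eq)
  also have "\<dots> = ((x + d) mod n + (n - x)) mod n" using modn_mod[OF n] by simp
  also have "\<dots> = (x + d + (n - x)) mod n" by (simp add: mod_add_left_eq)
  also have "x + d + (n - x) = d + n" using assms by simp
  finally show ?thesis using assms by simp
qed

lemma modn_self: "x \<in> {1..n} \<Longrightarrow> modn n x = x"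
  unfolding modn_def by (cases "x = n") auto

lemma coalition_eq:
  assumes "x \<in> {1..n}" "is_IA n s t"
  shows "coalition n x t = (\<lambda>i. modn n (x + phi t i)) ` {1..s}"
proof -
  have s: "length t = s" "1 \<le> s" using assms unfolding is_IA_def by auto
  have "{1..s} = insert 1 {2..s}" using s by auto
  then have "(\<lambda>i. modn n (x + phi t i)) ` {1..s} = insert x ((\<lambda>i. modn n (x + phi t i)) ` {2..s})"
    using modn_self[OF assms(1)] phi_1[of t] by simp
  then show ?thesis unfolding coalition_def using s by auto
qed

lemma offsets_coalition:
  assumes "x \<in> {1..n}" "is_IA n s t"
  shows "(\<lambda>y. (y + (n - x)) mod n) ` coalition n x t = phi t ` {1..s}"
proof -
  have "(\<lambda>y. (y + (n - x)) mod n) ` coalition n x t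
      = (\<lambda>i. (modn n (x + phi t i) + (n - x)) mod n) ` {1..s}"
    unfolding coalition_eq[OF assms] image_image by simp
  also have "\<dots> = phi t ` {1..s}"
    using offset_recover[OF assms(1)] phi_lt_n[OF assms(2)] by (intro image_cong) auto
  finally show ?thesis .
qed

lemma phi_list_sorted: "sorted_wrt (<) (map (phi t) [1..<Suc s])"
  unfolding sorted_wrt_map
  by (rule sorted_wrt_mono_rel[OF _ sorted_wrt_upt]) (auto intro: phi_mono)

lemma coalition_inj:
  assumes "x \<in> {1..n}" "is_IA n s t" "is_IA n s' t'"
    and "coalition n x t = coalition n x t'"
  shows "t = t'"
proof -
  have "phi t ` {1..s} = phi t' ` {1..s'}"
    using offsets_coalition[OF assms(1,2)] offsets_coalition[OF assms(1,3)] assms(4) by simp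
  moreover have "\<And>m. set [1..<Suc m] = {1..m}" by auto
  ultimately have "set (map (phi t) [1..<Suc s]) = set (map (phi t') [1..<Suc s'])"
    by (simp only: set_map)
  then have L: "map (phi t) [1..<Suc s] = map (phi t') [1..<Suc s']"
    using strict_sorted_equal[OF phi_list_sorted phi_list_sorted] by metis
  then have "length (map (phi t) [1..<Suc s]) = length (map (phi t') [1..<Suc s'])" by (rule arg_cong)
  then have ss: "s = s'" by (simp only: length_map length_upt)
  have ph: "phi t i = phi t' i" if "1 \<le> i" "i \<le> Suc s" for i
  proof (cases "i = Suc s")
    case True then show ?thesis using phi_last assms(2,3) ss by simp
  next
    case False
    then have "i - 1 < s" using that by simp
    then have "map (phi t) [1..<Suc s] ! (i - 1) = map (phi t') [1..<Suc s] ! (i - 1)"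
      using L ss by (simp only:)
    then show ?thesis using \<open>i - 1 < s\<close> that by (simp del: upt_Suc)
  qed
  show ?thesis
  proof (rule nth_equalityI)
    show "length t = length t'" using assms(2,3) ss unfolding is_IA_def by simp
    fix k assume k: "k < length t"
    have "length t = s" using assms(2) unfolding is_IA_def by simp
    then have "phi t (Suc (Suc k)) = phi t' (Suc (Suc k))" "phi t (Suc k) = phi t' (Suc k)"
      using k ph by auto
    then show "t ! k = t' ! k" using phi_Suc[of "Suc k" t] phi_Suc[of "Suc k" t'] by simp
  qed
qed



lemma int_mod_key:
  fixes k y a n :: int
  assumes "0 \<le> k - a" "k - a < n" "0 \<le> y" "y < n"
  shows "(k mod n = y) \<longleftrightarrow> (k - a = (y - a) mod n)"
proof -
  have km: "(k - a) mod n = k - a" using assms by simp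
  have ym: "y mod n = y" using assms by simp
  show ?thesis
  proof
    assume "k mod n = y"
    then have "k mod n = y mod n" using ym by simp
    then have "(k - a) mod n = (y - a) mod n" by (rule mod_diff_cong) simp
    then show "k - a = (y - a) mod n" using km by simp
  next
    assume "k - a = (y - a) mod n"
    then have "(k - a) mod n = (y - a) mod n" using km by simp
    then have "(k - a + a) mod n = (y - a + a) mod n" by (rule mod_add_cong) simp
    then show "k mod n = y" using ym by simp
  qed
qed

lemma count_interval:
  assumes "0 < n" "y < n" "d \<le> n"
  shows "card {k. a \<le> k \<and> k < a + d \<and> k mod n = y} =
         (if (int y - int a) mod int n < int d then 1 else 0)"
proof -
  define r where "r = (int y - int a) mod int n"
  have r: "0 \<le> r" "r < int n" using assms r_def by auto
  have key: "a \<le> k \<Longrightarrow> k < a + d \<Longrightarrow> (k mod n = y \<longleftrightarrow> int k - int a = r)" for k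
  proof -
    assume "a \<le> k" "k < a + d"
    then have "0 \<le> int k - int a" "int k - int a < int n" using assms by auto
    then have "(int k mod int n = int y) \<longleftrightarrow> (int k - int a = r)"
      using int_mod_key[of "int k" "int a" "int n" "int y"] assms r_def by simp
    moreover have "(k mod n = y) \<longleftrightarrow> (int k mod int n = int y)"
      by (metis of_nat_eq_iff zmod_int)
    ultimately show ?thesis by simp
  qed
  show ?thesis
  proof (cases "r < int d")
    case True
    have "{k. a \<le> k \<and> k < a + d \<and> k mod n = y} = {a + nat r}"
    proof (rule set_eqI)
      fix k
      show "k \<in> {k. a \<le> k \<and> k < a + d \<and> k mod n = y} \<longleftrightarrow> k \<in> {a + nat r}"
      proof
        assume "k \<in> {k. a \<le> k \<and> k < a + d \<and> k mod n = y}"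
        then have "a \<le> k" "k < a + d" "k mod n = y" by auto
        then have "int k - int a = r" using key by blast
        then show "k \<in> {a + nat r}" using r by auto
      next
        assume "k \<in> {a + nat r}"
        then have k: "k = a + nat r" by simp
        then have "a \<le> k" "k < a + d" using True r by auto
        moreover have "int k - int a = r" using k r by simp
        ultimately show "k \<in> {k. a \<le> k \<and> k < a + d \<and> k mod n = y}" using key by auto
      qed
    qed
    then show ?thesis using True r_def by simp
  next
    case False
    have "{k. a \<le> k \<and> k < a + d \<and> k mod n = y} = {}"
    proof (rule ccontr)
      assume "{k. a \<le> k \<and> k < a + d \<and> k mod n = y} \<noteq> {}"
      then obtain k where "a \<le> k" "k < a + d" "k mod n = y" by auto
      then have "int k - int a = r" using key by blast
      then show False using False \<open>k < a + d\<close> by simp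
    qed
    then show ?thesis using False r_def by simp
  qed
qed

lemma count_mod:
  assumes "0 < n" "y < n"
  shows "card {k. k < D \<and> k mod n = y} = D div n + (if y < D mod n then 1 else 0)"
proof (induction D)
  case 0 then show ?case by simp
next
  case (Suc D)
  have e: "{k. k < Suc D \<and> k mod n = y} = {k. k < D \<and> k mod n = y} \<union> (if D mod n = y then {D} else {})"
    by (auto simp: less_Suc_eq)
  have "card {k. k < Suc D \<and> k mod n = y} = card {k. k < D \<and> k mod n = y} + (if D mod n = y then 1 else 0)"
    unfolding e by (auto simp: card_insert_if)
  also have "\<dots> = D div n + (if y < D mod n then 1 else 0) + (if D mod n = y then 1 else 0)"
    using Suc by simp
  also have "\<dots> = Suc D div n + (if y < Suc D mod n then 1 else 0)"
  proof -
    have "D mod n < n" using assms by simp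
    then show ?thesis using assms
      by (cases "Suc (D mod n) = n") (auto simp: div_Suc mod_Suc)
  qed
  finally show ?case .
qed

lemma count_designated:
  fixes d :: "nat \<Rightarrow> nat"
  assumes "0 < n" "y < n" "\<And>j. j < M \<Longrightarrow> d j \<le> n"
  shows "card {j. j < M \<and> (int y - int (\<Sum>i<j. d i)) mod int n < int (d j)} =
         card {k. k < (\<Sum>i<M. d i) \<and> k mod n = y}"
  using assms(3)
proof (induction M)
  case 0 then show ?case by simp
next
  case (Suc M)
  define H where "H = (\<Sum>i<M. d i)"
  define P where "P j \<longleftrightarrow> (int y - int (\<Sum>i<j. d i)) mod int n < int (d j)" for j
  have e1: "{j. j < Suc M \<and> P j} = {j. j < M \<and> P j} \<union> (if P M then {M} else {})" by (auto simp: less_Suc_eq)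
  have c1: "card {j. j < Suc M \<and> P j} = card {j. j < M \<and> P j} + (if P M then 1 else 0)"
    unfolding e1 by (auto simp: card_insert_if)
  have e2: "{k. k < H + d M \<and> k mod n = y} =
     {k. k < H \<and> k mod n = y} \<union> {k. H \<le> k \<and> k < H + d M \<and> k mod n = y}" by auto
  have c2: "card {k. k < H + d M \<and> k mod n = y} =
     card {k. k < H \<and> k mod n = y} + card {k. H \<le> k \<and> k < H + d M \<and> k mod n = y}"
    unfolding e2 by (rule card_Un_disjoint) auto
  have c3: "card {k. H \<le> k \<and> k < H + d M \<and> k mod n = y} = (if P M then 1 else 0)"
    using count_interval[OF assms(1,2) Suc.prems[of M]] unfolding P_def H_def by simp
  have IH: "card {j. j < M \<and> P j} = card {k. k < H \<and> k mod n = y}"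
    using Suc unfolding P_def H_def by simp
  show ?case using c1 c2 c3 IH unfolding P_def[symmetric] H_def by simp
qed



lemma final_arith:
  fixes a D c n N :: nat
  assumes n: "0 < n" and N: "N = n * a + D"
    and c: "c = a + (D div n + (if y < D mod n then 1 else 0))"
  shows "\<lfloor>real N / real n\<rfloor> \<le> int c \<and> int c \<le> \<lceil>real N / real n\<rceil>"
proof
  have "N div n = a + D div n" using N n by simp
  then show "\<lfloor>real N / real n\<rfloor> \<le> int c"
    unfolding floor_divide_of_nat_eq using c by simp
next
  have key: "n * c < N + n"
  proof (cases "y < D mod n")
    case True
    have "n * (D div n) + D mod n = D" by simp
    moreover have "n * c = n * a + n * (D div n) + n" using True c by (simp add: algebra_simps)
    ultimately show ?thesis using True N by linarith
  next
    case False
    have "n * (D div n) \<le> D" by simp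
    then have "n * c \<le> N" using False N c by (simp add: algebra_simps)
    then show ?thesis using n by linarith
  qed
  then have "real n * real c < real N + real n" by (metis of_nat_add of_nat_less_iff of_nat_mult)
  then have "real c - 1 < real N / real n" using n by (simp add: field_simps)
  then show "int c \<le> \<lceil>real N / real n\<rceil>" by (simp add: le_ceiling_iff)
qed

lemma sum_choose_1n: "(\<Sum>s\<in>{1..n}. n choose s) = 2 ^ n - 1"
proof -
  have "{..n} = insert 0 {1..n}" by auto
  then have "(\<Sum>s\<le>n. n choose s) = 1 + (\<Sum>s\<in>{1..n}. n choose s)" by simp
  then show ?thesis using choose_row_sum[of n] by simp
qed

theorem theorem10:
  fixes n :: nat and L :: "nat list list"
  assumes "n \<ge> 1"
    and "distinct L"
    and "set L = (\<Union>s\<in>{1..n}. Pset n s)"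
  shows "\<forall>x\<in>{1..n}.
           \<lfloor>(2 ^ n - 1) / real n\<rfloor> \<le> int (card (CV n L x)) \<and>
           int (card (CV n L x)) \<le> \<lceil>(2 ^ n - 1) / real n\<rceil>"
proof
  fix x assume x: "x \<in> {1..n}"
  have n0: "0 < n" using assms(1) by simp
  define M where "M = length L"
  define J where "J = {j. j < M \<and> designated n L x j}"
  define Aall where "Aall = (\<Union>s\<in>{1..n}. Aset n s)"
  define D where "D = (\<Sum>i<M. dval n (L ! i))"
  define N where "N = (2::nat) ^ n - 1"
  have IA_A: "t \<in> Aset n s \<Longrightarrow> is_IA n s t" for t s unfolding Aset_def Eset_def by simp
  have IA_P: "t \<in> Pset n s \<Longrightarrow> is_IA n s t" for t s unfolding Pset_def Eset_def by simp
  have finA: "finite (Aset n s)" if "s \<in> {1..n}" for s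
    using finite_Eset[of s n] that unfolding Aset_def by auto
  have finP: "finite (Pset n s)" if "s \<in> {1..n}" for s
    using finite_Eset[of s n] that unfolding Pset_def by auto
  have lenA: "t \<in> Aset n s \<Longrightarrow> length t = s \<and> period t = s" for t s
    using IA_A unfolding is_IA_def Aset_def by auto
  have lenP: "t \<in> Pset n s \<Longrightarrow> length t = s \<and> period t < s" for t s
    using IA_P unfolding is_IA_def Pset_def by auto
  have CVeq: "CV n L x = coalition n x ` (Aall \<union> (!) L ` J)"
    unfolding CV_def Aall_def J_def M_def by auto
  have LIA: "j < M \<Longrightarrow> \<exists>s\<in>{1..n}. L ! j \<in> Pset n s" for j
    using assms(3) M_def nth_mem[of j L] by auto
  have inj: "inj_on (coalition n x) (Aall \<union> (!) L ` J)"
  proof (rule inj_onI)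
    fix t t' assume t: "t \<in> Aall \<union> (!) L ` J" and t': "t' \<in> Aall \<union> (!) L ` J"
      and e: "coalition n x t = coalition n x t'"
    have "\<exists>s. is_IA n s u" if "u \<in> Aall \<union> (!) L ` J" for u
      using that IA_A IA_P LIA unfolding Aall_def J_def by blast
    then obtain s s' where "is_IA n s t" "is_IA n s' t'" using t t' by blast
    then show "t = t'" using coalition_inj[OF x _ _ e] by blast
  qed
  have finAall: "finite Aall" unfolding Aall_def using finA by auto
  have finJ: "finite J" unfolding J_def by auto
  have disj: "Aall \<inter> (!) L ` J = {}"
  proof -
    have "u \<notin> Aall" if u_in: "u \<in> (!) L ` J" for u
    proof -
      obtain j where "j \<in> J" "u = L ! j" using u_in by auto
      then obtain s where "L ! j \<in> Pset n s" using LIA unfolding J_def by blast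
      then have "period u < length u" using lenP \<open>u = L ! j\<close> by auto
      then show ?thesis using lenA unfolding Aall_def by fastforce
    qed
    then show ?thesis by blast
  qed
  have cardCV: "card (CV n L x) = card Aall + card J"
  proof -
    have "card (CV n L x) = card (Aall \<union> (!) L ` J)" using CVeq inj card_image by simp
    also have "\<dots> = card Aall + card ((!) L ` J)"
      using finAall finJ disj by (simp add: card_Un_disjoint)
    also have "card ((!) L ` J) = card J"
      using inj_on_nth[OF assms(2), of J] card_image unfolding J_def M_def by fastforce
    finally show ?thesis .
  qed
  have cardA: "card Aall = (\<Sum>s\<in>{1..n}. card (Aset n s))"
    unfolding Aall_def
  proof (rule card_UN_disjoint)
    show "\<forall>i\<in>{1..n}. \<forall>j\<in>{1..n}. i \<noteq> j \<longrightarrow> Aset n i \<inter> Aset n j = {}"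
      using lenA by blast
  qed (use finA in auto)
  have Dsum: "D = (\<Sum>s\<in>{1..n}. \<Sum>t\<in>Pset n s. dval n t)"
  proof -
    have "D = sum_list (map (dval n) L)"
      unfolding D_def M_def by (simp add: sum_list_sum_nth atLeast0LessThan)
    also have "\<dots> = sum (dval n) (set L)" by (rule sum_list_distinct_conv_sum_set[OF assms(2)])
    also have "\<dots> = (\<Sum>s\<in>{1..n}. \<Sum>t\<in>Pset n s. dval n t)"
      unfolding assms(3)
    proof (rule sum.UNION_disjoint)
      show "\<forall>i\<in>{1..n}. \<forall>j\<in>{1..n}. i \<noteq> j \<longrightarrow> Pset n i \<inter> Pset n j = {}"
        using lenP by blast
    qed (use finP in auto)
    finally show ?thesis .
  qed
  have NA: "N = n * card Aall + D"
  proof -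
    have "n * card Aall + D = (\<Sum>s\<in>{1..n}. n * card (Aset n s) + (\<Sum>t\<in>Pset n s. dval n t))"
      unfolding cardA Dsum by (simp add: sum.distrib sum_distrib_left)
    also have "\<dots> = (\<Sum>s\<in>{1..n}. n choose s)"
      by (rule sum.cong) (auto intro: E_split)
    finally show ?thesis unfolding N_def using sum_choose_1n by simp
  qed
  have dle: "dval n (L ! j) \<le> n" if j_lt: "j < M" for j
  proof -
    obtain s where "L ! j \<in> Pset n s" using LIA[OF j_lt] by blast
    then have "period (L ! j) \<le> length (L ! j)" using lenP by fastforce
    then have "n * period (L ! j) div length (L ! j) \<le> n * length (L ! j) div length (L ! j)"
      by (intro div_le_mono mult_le_mono2)
    also have "\<dots> \<le> n" by simp
    finally show ?thesis unfolding dval_def .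
  qed
  have y: "x - 1 < n" using x by auto
  have Jeq: "J = {j. j < M \<and> (int (x - 1) - int (\<Sum>i<j. dval n (L ! i))) mod int n < int (dval n (L ! j))}"
    unfolding J_def designated_def Hval_def using x by auto
  have cardJ: "card J = D div n + (if x - 1 < D mod n then 1 else 0)"
  proof -
    have "card J = card {k. k < D \<and> k mod n = x - 1}"
      unfolding Jeq D_def
      by (rule count_designated[where d = "\<lambda>i. dval n (L ! i)", OF n0 y dle])
    then show ?thesis using count_mod[OF n0 y] by simp
  qed
  have fa: "\<lfloor>real N / real n\<rfloor> \<le> int (card (CV n L x)) \<and> int (card (CV n L x)) \<le> \<lceil>real N / real n\<rceil>"
    by (rule final_arith[OF n0 NA]) (simp add: cardCV cardJ)
  have "real N = 2 ^ n - 1" unfolding N_def by (simp add: of_nat_diff)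
  then show "\<lfloor>(2 ^ n - 1) / real n\<rfloor> \<le> int (card (CV n L x)) \<and>
           int (card (CV n L x)) \<le> \<lceil>(2 ^ n - 1) / real n\<rceil>" using fa by simp
qed

end
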